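(* Let $a$ be a polynomial of degree $n$ with $\int_0^1 a(x)\,dx=0$, so that $(a,0)\in\mathcal U_{n/n+1}$. Then the Zariski tangent space $T_{(a,0)}\mathcal U_{n/n+1}$ is a vector space of dimension $n+1$, consisting of the pairs of polynomials $(p,q)$ of degree at most $n$ such that $q$ and $a$ are co-linear (i.e. $q\in\mathbb C\cdot a$) and $\int_0^1 p(x)\,dx=0$.
   Context: Work over $\mathbb C$. Let $\mathcal A_n\cong\mathbb C^{2n+2}$ be the vector space of pairs $(a,b)$ of polynomials of degree at most $n$ (identified with Abel equations $\frac{dy}{dx}=a(x)y^2+b(x)y^3$). The set $\mathcal U_{n/n+1}\subset\mathcal A_n$ is the set of pairs $(a,b)$ with $\deg a,\deg b\leq n$, $\int_0^1 a(x)dx=\int_0^1 b(x)dx=0$, and $a,b$ co-linear polynomials (linearly dependent over $\mathbb C$). *)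

theory Defs
  imports "HOL-Analysis.Analysis" "HOL-Computational_Algebra.Polynomial"
begin

type_synonym abelpair = "complex poly \<times> complex poly"

text \<open>The space A_n of pairs (a,b) of complex polynomials of degree at most n,
  with coordinates the coefficients (a_0..a_n, b_0..b_n), i.e. C^(2n+2).\<close>
definition A_space :: "nat \<Rightarrow> abelpair set" where
  "A_space n = {(a, b). degree a \<le> n \<and> degree b \<le> n}"

definition int01 :: "complex poly \<Rightarrow> complex" where
  "int01 p = integral {0..1} (\<lambda>x::real. poly p (complex_of_real x))"

definition colinear :: "complex poly \<Rightarrow> complex poly \<Rightarrow> bool" where
  "colinear p q \<longleftrightarrow> (\<exists>c1 c2. (c1 \<noteq> 0 \<or> c2 \<noteq> 0) \<and> smult c1 p + smult c2 q = 0)"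

definition U_set :: "nat \<Rightarrow> abelpair set" where
  "U_set n = {(a, b) \<in> A_space n. int01 a = 0 \<and> int01 b = 0 \<and> colinear a b}"

inductive polyfun :: "nat \<Rightarrow> (abelpair \<Rightarrow> complex) \<Rightarrow> bool" for n where
  pf_const: "polyfun n (\<lambda>_. c)"
| pf_coordA: "i \<le> n \<Longrightarrow> polyfun n (\<lambda>x. coeff (fst x) i)"
| pf_coordB: "i \<le> n \<Longrightarrow> polyfun n (\<lambda>x. coeff (snd x) i)"
| pf_add: "polyfun n f \<Longrightarrow> polyfun n g \<Longrightarrow> polyfun n (\<lambda>x. f x + g x)"
| pf_mult: "polyfun n f \<Longrightarrow> polyfun n g \<Longrightarrow> polyfun n (\<lambda>x. f x * g x)"

definition pscale :: "complex \<Rightarrow> abelpair \<Rightarrow> abelpair" where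
  "pscale c v = (smult c (fst v), smult c (snd v))"

definition zariski_tangent :: "nat \<Rightarrow> abelpair set \<Rightarrow> abelpair \<Rightarrow> abelpair set" where
  "zariski_tangent n V P =
     {v \<in> A_space n. \<forall>f. polyfun n f \<and> (\<forall>x\<in>V. f x = 0) \<longrightarrow>
        deriv (\<lambda>t::complex. f (fst P + smult t (fst v), snd P + smult t (snd v))) 0 = 0}"

end

theory Submission
  imports Defs
begin

lemma dpow: "((\<lambda>a::real. a ^ Suc i / real (Suc i)) has_real_derivative x ^ i) (at x)"
proof -
  have "((\<lambda>a::real. a ^ Suc i / real (Suc i)) has_real_derivative (real (Suc i) * x ^ i) / real (Suc i)) (at x)"
    apply (intro DERIV_cdivide)
    using DERIV_pow[of "Suc i" x UNIV] by simp
  then show ?thesis by (simp del: of_nat_Suc)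
qed

lemma mono_int: "((\<lambda>x::real. complex_of_real x ^ i) has_integral (1 / of_nat (Suc i))) {0..1}"
proof -
  have "((\<lambda>x::real. x ^ i) has_integral (1 / real (Suc i))) {0..1}"
  proof -
    have "((\<lambda>x::real. x ^ i) has_integral ((1::real)^Suc i / Suc i - 0^Suc i / Suc i)) {0..1}"
      apply (rule fundamental_theorem_of_calculus)
       apply simp
      apply (rule iffD1[OF has_real_derivative_iff_has_vector_derivative])
      apply (rule has_field_derivative_at_within)
      by (rule dpow)
    then show ?thesis by simp
  qed
  from has_integral_of_real[OF this, where 'b=complex] show ?thesis by (simp add: of_real_divide)
qed

lemma poly_sum_N: "degree (p :: complex poly) \<le> N \<Longrightarrow> poly p x = (\<Sum>i\<le>N. coeff p i * x ^ i)"
  unfolding poly_altdef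
  apply (rule sum.mono_neutral_left)
  apply (auto simp: coeff_eq_0)
  done

lemma int01_formula:
  assumes "degree p \<le> N"
  shows "int01 p = (\<Sum>i\<le>N. coeff p i / of_nat (Suc i))"
proof -
  have "((\<lambda>x::real. \<Sum>i\<le>N. coeff p i * complex_of_real x ^ i) has_integral (\<Sum>i\<le>N. coeff p i * (1 / of_nat (Suc i)))) {0..1}"
    by (intro has_integral_sum has_integral_mult_right mono_int) auto
  then have "((\<lambda>x::real. poly p (complex_of_real x)) has_integral (\<Sum>i\<le>N. coeff p i / of_nat (Suc i))) {0..1}"
    using poly_sum_N[OF assms] by simp
  then show ?thesis unfolding int01_def by (rule integral_unique)
qed

lemma int01_add: "int01 (p + q) = int01 p + int01 q"
proof -
  define N where "N = max (degree p) (degree q)"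
  have "degree (p+q) \<le> N" "degree p \<le> N" "degree q \<le> N" unfolding N_def
    by (auto intro: degree_add_le_max order.trans)
  then show ?thesis by (simp add: int01_formula add_divide_distrib sum.distrib)
qed

lemma int01_smult: "int01 (smult c p) = c * int01 p"
  using int01_formula[of "smult c p" "degree p"] int01_formula[of p "degree p"]
  by (simp add: sum_distrib_left)

lemma int01_diff: "int01 (p - q) = int01 p - int01 q"
  using int01_add[of "p - q" q] by simp

lemma int01_monom: "int01 (monom 1 k) = 1 / of_nat (Suc k)"
proof -
  have "int01 (monom 1 k) = (\<Sum>i\<le>k. coeff (monom 1 k) i / of_nat (Suc i))"
    by (rule int01_formula) (simp add: degree_monom_le)
  also have "\<dots> = (\<Sum>i\<in>{k}. coeff (monom 1 k) i / of_nat (Suc i))"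
    by (rule sum.mono_neutral_right) (auto simp: coeff_monom)
  finally show ?thesis by simp
qed

lemma int01_const: "int01 [:c:] = c"
  using int01_formula[of "[:c:]" 0] by simp

lemma polyfun_curve:
  assumes "polyfun n f"
  shows "\<exists>D. ((\<lambda>t. f (fst P + smult t (fst v), snd P + smult t (snd v))) has_field_derivative D) (at 0)
     \<and> ((\<lambda>t. f (fst P + smult t (fst v) + smult (t^2) (fst w), snd P + smult t (snd v) + smult (t^2) (snd w))) has_field_derivative D) (at 0)"
  using assms
proof induction
  case (pf_const c)
  then show ?case by (auto intro!: exI[of _ 0])
next
  case (pf_coordA i)
  have "((\<lambda>t. coeff (fst P) i + t * coeff (fst v) i) has_field_derivative coeff (fst v) i) (at 0)"
    by (auto intro!: derivative_eq_intros)
  moreover have "((\<lambda>t. coeff (fst P) i + t * coeff (fst v) i + t^2 * coeff (fst w) i) has_field_derivative coeff (fst v) i) (at 0)"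
    by (auto intro!: derivative_eq_intros)
  ultimately show ?case by auto
next
  case (pf_coordB i)
  have "((\<lambda>t. coeff (snd P) i + t * coeff (snd v) i) has_field_derivative coeff (snd v) i) (at 0)"
    by (auto intro!: derivative_eq_intros)
  moreover have "((\<lambda>t. coeff (snd P) i + t * coeff (snd v) i + t^2 * coeff (snd w) i) has_field_derivative coeff (snd v) i) (at 0)"
    by (auto intro!: derivative_eq_intros)
  ultimately show ?case by auto
next
  case (pf_add f g)
  then obtain D1 D2 where "((\<lambda>t. f (fst P + smult t (fst v), snd P + smult t (snd v))) has_field_derivative D1) (at 0)"
     "((\<lambda>t. f (fst P + smult t (fst v) + smult (t^2) (fst w), snd P + smult t (snd v) + smult (t^2) (snd w))) has_field_derivative D1) (at 0)"
     "((\<lambda>t. g (fst P + smult t (fst v), snd P + smult t (snd v))) has_field_derivative D2) (at 0)"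
     "((\<lambda>t. g (fst P + smult t (fst v) + smult (t^2) (fst w), snd P + smult t (snd v) + smult (t^2) (snd w))) has_field_derivative D2) (at 0)"
    by blast
  then show ?case by (intro exI[of _ "D1 + D2"]) (auto intro!: DERIV_add)
next
  case (pf_mult f g)
  then obtain D1 D2 where d: "((\<lambda>t. f (fst P + smult t (fst v), snd P + smult t (snd v))) has_field_derivative D1) (at 0)"
     "((\<lambda>t. f (fst P + smult t (fst v) + smult (t^2) (fst w), snd P + smult t (snd v) + smult (t^2) (snd w))) has_field_derivative D1) (at 0)"
     "((\<lambda>t. g (fst P + smult t (fst v), snd P + smult t (snd v))) has_field_derivative D2) (at 0)"
     "((\<lambda>t. g (fst P + smult t (fst v) + smult (t^2) (fst w), snd P + smult t (snd v) + smult (t^2) (snd w))) has_field_derivative D2) (at 0)"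
    by blast
  show ?case
    apply (intro exI[of _ "D1 * g P + D2 * f P"] conjI)
    using DERIV_mult[OF d(1) d(3)] DERIV_mult[OF d(2) d(4)] by simp_all
qed

lemma polyfun_sum: "finite A \<Longrightarrow> (\<And>i. i \<in> A \<Longrightarrow> polyfun n (g i)) \<Longrightarrow> polyfun n (\<lambda>x. \<Sum>i\<in>A. g i x)"
proof (induction A rule: finite_induct)
  case empty
  then show ?case using pf_const[of n 0] by simp
next
  case (insert a A)
  then show ?case using pf_add[of n "g a" "\<lambda>x. \<Sum>i\<in>A. g i x"] by simp
qed

lemma vs: "vector_space pscale"
  by unfold_locales (auto simp: pscale_def smult_add_right smult_add_left)


lemma int01_zero: "int01 0 = 0"
  using int01_const[of 0] by simp

lemma deriv_lin: "deriv (\<lambda>t::complex. t * c) 0 = c"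
  by (rule DERIV_imp_deriv) (auto intro!: derivative_eq_intros)

theorem mainTheorem2:
  fixes a :: "complex poly" and n :: nat
  assumes "a \<noteq> 0" and "degree a = n" and "int01 a = 0"
  shows "zariski_tangent n (U_set n) (a, 0) =
           {(p, q). degree p \<le> n \<and> degree q \<le> n \<and> (\<exists>c. q = smult c a) \<and> int01 p = 0}
         \<and> vector_space.dim pscale (zariski_tangent n (U_set n) (a, 0)) = n + 1"
proof -
  define S where "S = {(p, q). degree p \<le> n \<and> degree q \<le> n \<and> (\<exists>c. q = smult c a) \<and> int01 p = 0}"
  have lc: "coeff a n \<noteq> 0" using assms(1,2) by auto
  have T_sub: "zariski_tangent n (U_set n) (a, 0) \<subseteq> S"
  proof
    fix v assume v: "v \<in> zariski_tangent n (U_set n) (a, 0)"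
    obtain p q where vpq: "v = (p, q)" by force
    from v have dp: "degree p \<le> n" "degree q \<le> n"
      and Z: "\<And>f. polyfun n f \<Longrightarrow> (\<forall>x\<in>U_set n. f x = 0) \<Longrightarrow>
          deriv (\<lambda>t. f (a + smult t p, 0 + smult t q)) 0 = 0"
      unfolding zariski_tangent_def A_space_def vpq by auto
    define L where "L = (\<lambda>x::abelpair. \<Sum>i\<le>n. coeff (fst x) i / of_nat (Suc i))"
    have "polyfun n L" unfolding L_def
    proof (rule polyfun_sum)
      fix i assume "i \<in> {..n}"
      then have "polyfun n (\<lambda>x. coeff (fst x) i * (1 / of_nat (Suc i)))"
        by (intro pf_mult pf_coordA pf_const) auto
      then show "polyfun n (\<lambda>x. coeff (fst x) i / of_nat (Suc i))" by simp
    qed simp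
    moreover have "\<forall>x\<in>U_set n. L x = 0"
      unfolding U_set_def A_space_def L_def using int01_formula by auto
    ultimately have d0: "deriv (\<lambda>t. L (a + smult t p, 0 + smult t q)) 0 = 0" by (rule Z)
    have "\<And>t. L (a + smult t p, 0 + smult t q) = t * int01 p"
    proof -
      fix t
      have "degree (a + smult t p) \<le> n" using dp assms(2)
        by (metis degree_add_le degree_smult_le order.trans order_refl)
      then show "L (a + smult t p, 0 + smult t q) = t * int01 p"
        unfolding L_def using int01_formula[of "a + smult t p" n]
        by (simp add: int01_add int01_smult assms(3))
    qed
    with d0 deriv_lin[of "int01 p"] have ip: "int01 p = 0" by simp
    have minor: "coeff a i * coeff q j = coeff a j * coeff q i" if ij: "i \<le> n" "j \<le> n" for i j
    proof -
      define M where "M = (\<lambda>x::abelpair. coeff (fst x) i * coeff (snd x) j + (-1) * (coeff (fst x) j * coeff (snd x) i))"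
      have "polyfun n M" unfolding M_def using ij
        by (intro pf_mult pf_add pf_coordA pf_coordB pf_const)
      moreover have "\<forall>x\<in>U_set n. M x = 0"
      proof
        fix x assume "x \<in> U_set n"
        then obtain b c where x: "x = (b, c)" and col: "colinear b c" unfolding U_set_def by auto
        then obtain c1 c2 where nz: "c1 \<noteq> 0 \<or> c2 \<noteq> 0" and e: "smult c1 b + smult c2 c = 0"
          unfolding colinear_def by auto
        have ce: "\<And>k. c1 * coeff b k + c2 * coeff c k = 0"
          using arg_cong[OF e, of "\<lambda>r. coeff r k" for k] by simp
        have "coeff b i * coeff c j - coeff b j * coeff c i = 0"
        proof (cases "c1 = 0")
          case True
          then have "c2 \<noteq> 0" using nz by auto
          then have "\<And>k. coeff c k = 0" using ce True by simp
          then show ?thesis by simp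
        next
          case False
          have "c1 * (coeff b i * coeff c j - coeff b j * coeff c i) =
             (c1 * coeff b i) * coeff c j - (c1 * coeff b j) * coeff c i" by (simp add: algebra_simps)
          also have "\<dots> = (- (c2 * coeff c i)) * coeff c j - (- (c2 * coeff c j)) * coeff c i"
          proof -
            have h1: "c1 * coeff b i = - (c2 * coeff c i)" using ce[of i] by (simp add: eq_neg_iff_add_eq_0)
            have h2: "c1 * coeff b j = - (c2 * coeff c j)" using ce[of j] by (simp add: eq_neg_iff_add_eq_0)
            show ?thesis unfolding h1 h2 ..
          qed
          also have "\<dots> = 0" by (simp add: algebra_simps)
          finally show ?thesis using False by simp
        qed
        then show "M x = 0" unfolding M_def x by simp
      qed
      ultimately have d0: "deriv (\<lambda>t. M (a + smult t p, 0 + smult t q)) 0 = 0" by (rule Z)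
      have fe: "(\<lambda>t. M (a + smult t p, 0 + smult t q)) =
        (\<lambda>t. (coeff a i + t * coeff p i) * (t * coeff q j) + (-1) * ((coeff a j + t * coeff p j) * (t * coeff q i)))"
        unfolding M_def by simp
      have "deriv (\<lambda>t. M (a + smult t p, 0 + smult t q)) 0 = coeff a i * coeff q j - coeff a j * coeff q i"
        unfolding fe by (rule DERIV_imp_deriv) (auto intro!: derivative_eq_intros)
      with d0 show ?thesis by simp
    qed
    have "q = smult (coeff q n / coeff a n) a"
    proof (rule poly_eqI)
      fix j
      show "coeff q j = coeff (smult (coeff q n / coeff a n) a) j"
      proof (cases "j \<le> n")
        case True
        with minor[of n j] lc show ?thesis by (simp add: field_simps)
      next
        case False
        then show ?thesis using dp assms(2) by (simp add: coeff_eq_0)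
      qed
    qed
    then show "v \<in> S" unfolding S_def vpq using dp ip by auto
  qed
  have S_sub: "S \<subseteq> zariski_tangent n (U_set n) (a, 0)"
  proof
    fix v assume "v \<in> S"
    then obtain p c where v: "v = (p, smult c a)" and dp: "degree p \<le> n" and ip: "int01 p = 0"
      unfolding S_def by auto
    have vA: "v \<in> A_space n" unfolding A_space_def v using dp assms(2) degree_smult_le[of c a] by auto
    have "deriv (\<lambda>t::complex. f (fst (a, 0::complex poly) + smult t (fst v), snd (a, 0::complex poly) + smult t (snd v))) 0 = 0"
      if pf: "polyfun n f" and van: "\<forall>x\<in>U_set n. f x = 0" for f
    proof -
      obtain D where D1: "((\<lambda>t. f (fst (a, 0::complex poly) + smult t (fst v), snd (a, 0::complex poly) + smult t (snd v))) has_field_derivative D) (at 0)"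
        and D2: "((\<lambda>t. f (fst (a, 0::complex poly) + smult t (fst v) + smult (t^2) (fst (0::complex poly, smult c p)),
              snd (a, 0::complex poly) + smult t (snd v) + smult (t^2) (snd (0::complex poly, smult c p)))) has_field_derivative D) (at 0)"
        using polyfun_curve[OF pf, of "(a, 0)" v "(0, smult c p)"] by blast
      have inU: "(fst (a, 0::complex poly) + smult t (fst v) + smult (t^2) (fst (0::complex poly, smult c p)),
              snd (a, 0::complex poly) + smult t (snd v) + smult (t^2) (snd (0::complex poly, smult c p))) \<in> U_set n" for t
      proof -
        have d1: "degree (a + smult t p) \<le> n" using dp assms(2)
          by (metis degree_add_le degree_smult_le order.trans order_refl)
        have eq2: "smult t (smult c a) + smult (t^2) (smult c p) = smult (t * c) (a + smult t p)"
          by (simp add: smult_add_right power2_eq_square algebra_simps)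
        have "colinear (a + smult t p) (smult (t * c) (a + smult t p))"
          unfolding colinear_def by (intro exI[of _ "t * c"] exI[of _ "-1"]) auto
        moreover have "int01 (a + smult t p) = 0" by (simp add: int01_add int01_smult assms(3) ip)
        ultimately show ?thesis
          unfolding U_set_def A_space_def v using d1 eq2 degree_smult_le[of "t*c" "a + smult t p"]
          by (auto simp: int01_smult)
      qed
      have "((\<lambda>t. f (fst (a, 0::complex poly) + smult t (fst v) + smult (t^2) (fst (0::complex poly, smult c p)),
              snd (a, 0::complex poly) + smult t (snd v) + smult (t^2) (snd (0::complex poly, smult c p)))) has_field_derivative 0) (at 0)"
        using van inU by simp
      with D2 have "D = 0" by (rule DERIV_unique)
      with D1 show ?thesis by (simp add: DERIV_imp_deriv)
    qed
    then show "v \<in> zariski_tangent n (U_set n) (a, 0)"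
      unfolding zariski_tangent_def using vA by blast
  qed
  have TS: "zariski_tangent n (U_set n) (a, 0) = S" using T_sub S_sub by blast
  interpret V: vector_space pscale by (rule vs)
  define e where "e k = (monom (1::complex) k - [:1 / of_nat (Suc k):], 0::complex poly)" for k
  define z where "z = (0::complex poly, a)"
  define B where "B = e ` {1..n} \<union> {z}"
  have coeff_e: "coeff (fst (e k)) j = (if k = j then 1 else 0)" if "j \<ge> 1" for k j
    using that by (simp add: e_def coeff_monom coeff_pCons split: nat.splits)
  have inj: "inj_on e {1..n}"
  proof (rule inj_onI)
    fix k k' assume "k \<in> {1..n}" "k' \<in> {1..n}" "e k = e k'"
    then have "coeff (fst (e k)) k = coeff (fst (e k')) k" by simp
    with \<open>k \<in> {1..n}\<close> show "k = k'" using coeff_e by (auto split: if_splits)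
  qed
  have zn: "z \<notin> e ` {1..n}" using assms(1) by (auto simp: z_def e_def)
  have cardB: "card B = n + 1"
    unfolding B_def using card_image[OF inj] zn by simp
  have BS: "B \<subseteq> S"
  proof
    fix x assume "x \<in> B"
    then show "x \<in> S"
    proof (cases "x = z")
      case True
      then show ?thesis unfolding S_def z_def using assms(2) int01_zero
        by (auto intro!: exI[of _ 1])
    next
      case False
      with \<open>x \<in> B\<close> obtain k where k: "k \<in> {1..n}" "x = e k" unfolding B_def by auto
      have "degree (monom (1::complex) k - [:1 / of_nat (Suc k):]) \<le> n"
        using k degree_diff_le_max[of "monom (1::complex) k" "[:1 / of_nat (Suc k):]"]
        by (simp add: degree_monom_eq)
      moreover have "int01 (monom (1::complex) k - [:1 / of_nat (Suc k):]) = 0"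
        by (simp add: int01_diff int01_monom int01_const)
      ultimately show ?thesis unfolding S_def k e_def by (auto intro!: exI[of _ 0])
    qed
  qed
  have ind: "V.independent B"
    unfolding V.independent_explicit_module
  proof (intro allI impI)
    fix t u w
    assume ft: "finite t" and tB: "t \<subseteq> B" and sz: "(\<Sum>x\<in>t. pscale (u x) x) = 0" and wt: "w \<in> t"
    have fs: "(\<Sum>x\<in>t. smult (u x) (fst x)) = 0"
      using arg_cong[OF sz, of fst] by (simp add: fst_sum pscale_def)
    have ss: "(\<Sum>x\<in>t. smult (u x) (snd x)) = 0"
      using arg_cong[OF sz, of snd] by (simp add: snd_sum pscale_def)
    show "u w = 0"
    proof (cases "w = z")
      case True
      have "\<And>x. x \<in> t \<Longrightarrow> smult (u x) (snd x) = (if x = z then smult (u z) a else 0)"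
        using tB by (auto simp: B_def e_def z_def)
      then have "(\<Sum>x\<in>t. smult (u x) (snd x)) = (\<Sum>x\<in>t. if x = z then smult (u z) a else 0)"
        by (rule sum.cong[OF refl])
      also have "\<dots> = smult (u z) a" using ft wt True by simp
      finally have "smult (u z) a = 0" using ss by simp
      then show ?thesis using assms(1) True by simp
    next
      case False
      with wt tB obtain k where k: "k \<in> {1..n}" "w = e k" unfolding B_def by auto
      have "\<And>x. x \<in> t \<Longrightarrow> u x * coeff (fst x) k = (if x = e k then u (e k) else 0)"
      proof -
        fix x assume "x \<in> t"
        then have "x \<in> B" using tB by auto
        then consider "x = z" | k' where "k' \<in> {1..n}" "x = e k'" unfolding B_def by auto
        then show "u x * coeff (fst x) k = (if x = e k then u (e k) else 0)"
        proof cases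
          case 1
          then show ?thesis using zn k by (auto simp: z_def)
        next
          case 2
          then show ?thesis using coeff_e[of k k'] k inj_onD[OF inj, of k k'] by auto
        qed
      qed
      then have "(\<Sum>x\<in>t. u x * coeff (fst x) k) = (\<Sum>x\<in>t. if x = e k then u (e k) else 0)"
        by (rule sum.cong[OF refl])
      also have "\<dots> = u (e k)" using ft wt k by simp
      finally have "u (e k) = 0"
        using arg_cong[OF fs, of "\<lambda>r. coeff r k"] by (simp add: coeff_sum)
      then show ?thesis using k by simp
    qed
  qed
  have SB: "S \<subseteq> V.span B"
  proof
    fix v assume "v \<in> S"
    then obtain p c where v: "v = (p, smult c a)" and dp: "degree p \<le> n" and ip: "int01 p = 0"
      unfolding S_def by auto
    have split0: "{..n} = insert 0 {1..n}" by auto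
    have ip2: "coeff p 0 + (\<Sum>k\<in>{1..n}. coeff p k / of_nat (Suc k)) = 0"
      using int01_formula[OF dp] ip unfolding split0 by simp
    have fstq: "(\<Sum>k\<in>{1..n}. smult (coeff p k) (monom 1 k - [:1 / of_nat (Suc k):])) = p"
    proof (rule poly_eqI)
      fix j
      show "coeff (\<Sum>k\<in>{1..n}. smult (coeff p k) (monom 1 k - [:1 / of_nat (Suc k):])) j = coeff p j"
      proof (cases "j = 0")
        case True
        have "coeff (\<Sum>k\<in>{1..n}. smult (coeff p k) (monom 1 k - [:1 / of_nat (Suc k):])) j
           = (\<Sum>k\<in>{1..n}. - (coeff p k / of_nat (Suc k)))"
          unfolding coeff_sum True by (intro sum.cong refl) (auto simp: coeff_monom)
        also have "\<dots> = coeff p 0" using ip2 by (simp add: sum_negf) (metis add.commute add_eq_0_iff)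
        finally show ?thesis using True by simp
      next
        case False
        have "coeff (\<Sum>k\<in>{1..n}. smult (coeff p k) (monom 1 k - [:1 / of_nat (Suc k):])) j
           = (\<Sum>k\<in>{1..n}. if k = j then coeff p j else 0)"
          unfolding coeff_sum using False by (intro sum.cong refl) (auto simp: coeff_monom coeff_pCons split: nat.splits)
        also have "\<dots> = coeff p j" using False dp by (auto simp: coeff_eq_0)
        finally show ?thesis .
      qed
    qed
    have "v = (\<Sum>k\<in>{1..n}. pscale (coeff p k) (e k)) + pscale c z"
      unfolding v pscale_def e_def z_def using fstq by (simp add: prod_eq_iff fst_sum snd_sum)
    also have "\<dots> \<in> V.span B"
      by (intro V.span_add V.span_sum V.span_scale V.span_base) (auto simp: B_def)
    finally show "v \<in> V.span B" .
  qed
  have "V.dim S = n + 1" by (rule V.dim_unique[OF BS SB ind cardB])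
  then show ?thesis using TS S_def by simp
qed

end
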